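(* Consider two spacecraft $i=1,2$ together with an assigned third spacecraft $3$, with the notation of the context (edge $(1,2)$, $\rho(1,2)=\rho(2,1)=3$). Let $k^\alpha_{12},k^\beta_{12}>0$ with $k^\alpha_{12}\neq k^\beta_{12}$, and set $k^\alpha_{21}=k^\alpha_{12}$ and $k^\beta_{21}=k^\beta_{12}$. Define $$\Psi_{12}=k^\alpha_{12}\Psi^\alpha_{12}+k^\beta_{12}\Psi^\beta_{12},\quad e_{12}=k^\alpha_{12}e^\alpha_{12}+k^\beta_{12}e^\beta_{12},\quad e_{21}=k^\alpha_{21}e^\alpha_{21}+k^\beta_{21}e^\beta_{21}.$$ Then, along any trajectory of the kinematics $\dot R_i=R_i\hat\Omega_i$ ($i=1,2$): (i) $e_{12}=-Q^d_{21}e_{21}$, and hence $\|e_{12}\|=\|e_{21}\|$. (ii) $\frac{d}{dt}\Psi_{12}=e_{12}\cdot e_{\Omega_1}+e_{21}\cdot e_{\Omega_2}$. (iii) $\|\dot e_{12}\|\le (k^\alpha_{12}+k^\beta_{12})(\|e_{\Omega_1}\|+\|e_{\Omega_2}\|)+B^d\|e_{12}\|$ and $\|\dot e_{21}\|\le (k^\alpha_{12}+k^\beta_{12})(\|e_{\Omega_1}\|+\|e_{\Omega_2}\|)+B^d\|e_{21}\|$. (iv) If $\Psi_{12}\le\psi<2\min\{k^\alpha_{12},k^\beta_{12}\}$ for a constant $\psi$, then $$\underline\psi_{12}\|e_{12}\|^2\le\Psi_{12}\le\overline\psi_{12}\|e_{12}\|^2,$$ where $$\underline\psi_{12}=\frac{\min\{k^\alpha_{12},k^\beta_{12}\}}{2\max\{(k^\alpha_{12})^2,(k^\beta_{12})^2,(k^\alpha_{12}-k^\beta_{12})^2\}+2(k^\alpha_{12}+k^\beta_{12})^2},$$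 $$\overline\psi_{12}=\frac{\min\{k^\alpha_{12},k^\beta_{12}\}\,(k^\alpha_{12}+k^\beta_{12})}{\min\{(k^\alpha_{12})^2,(k^\beta_{12})^2\}\,\bigl(2\min\{k^\alpha_{12},k^\beta_{12}\}-\psi\bigr)}.$$
   Context: Notation: $\mathsf{SO}(3)=\{R\in\mathbb{R}^{3\times3}: R^TR=I,\ \det R=1\}$. The hat map $\hat{\cdot}:\mathbb{R}^3\to\mathfrak{so}(3)$ is defined by $\hat x y=x\times y$. $\|\cdot\|$ is the Euclidean norm, and $x\cdot y=x^Ty$. Spacecraft $i$ is a rigid body with attitude $R_i(t)\in\mathsf{SO}(3)$, which maps body-frame to inertial-frame coordinates. Its body angular velocity is $\Omega_i(t)\in\mathbb{R}^3$, and $\dot R_i=R_i\hat\Omega_i$. The spacecraft positions $p_i\in\mathbb{R}^3$ are fixed in the inertial frame. Set $s_{ij}=(p_j-p_i)/\|p_j-p_i\|$; these are constant unit vectors with $s_{ji}=-s_{ij}$. The line-of-sight measurement of spacecraft $j$ from spacecraft $i$, expressed in the body frame of $i$, is $b_{ij}=R_i^Ts_{ij}$. Set $b_{ijk}=b_{ij}\times b_{ik}$ and $s_{ijk}=s_{ij}\times s_{ik}$. The relative attitude is $Q_{ij}=R_j^TR_i$. For an edge $(i,j)$, a third spacecraft $k=\rho(i,j)=\rho(j,i)$ is assigned, with $p_i,p_j,p_k$ not collinear. Put $a_{ij}=a_{ji}=\|b_{ijk}\|\,\|b_{jik}\|$; this is a nonzero constant. A desired relative attitude $Q^d_{ij}:[0,\infty)\to\mathsf{SO}(3)$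 is smooth, with $\dot Q^d_{ij}=Q^d_{ij}\hat\Omega^d_{ij}$ and $Q^d_{ji}=(Q^d_{ij})^T$. Desired absolute angular velocities $\Omega^d_i(t)$ are $C^1$ functions chosen so that $\Omega^d_{ij}=\Omega^d_i-Q^d_{ji}\Omega^d_j$ for each edge, and $\|\Omega^d_i(t)\|\le B^d$ for all $t\ge0$, for a known constant $B^d>0$. The angular velocity error is $e_{\Omega_i}=\Omega_i-\Omega^d_i$. Error variables for $(i,j,k)$ with $k=\rho(i,j)$: $\Psi^\alpha_{ij}=1+b_{ji}\cdot Q^d_{ij}b_{ij}$, $\Psi^\beta_{ij}=1+\frac{1}{a_{ij}}\,b_{jik}\cdot Q^d_{ij}b_{ijk}$, $e^\alpha_{ij}=(Q^d_{ji}b_{ji})\times b_{ij}$, $e^\beta_{ij}=\frac{1}{a_{ij}}(Q^d_{ji}b_{jik})\times b_{ijk}$. With gains $k^\alpha_{ij}=k^\alpha_{ji}>0$ and $k^\beta_{ij}=k^\beta_{ji}>0$, set $\Psi_{ij}=k^\alpha_{ij}\Psi^\alpha_{ij}+k^\beta_{ij}\Psi^\beta_{ij}$ and $e_{ij}=k^\alpha_{ij}e^\alpha_{ij}+k^\beta_{ij}e^\beta_{ij}$. *)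

theory Defs
  imports "HOL-Analysis.Analysis"
begin

definition SO3 :: "(real^3^3) set" where
  "SO3 = {R. transpose R ** R = mat 1 \<and> det R = 1}"

definition hat :: "real^3 \<Rightarrow> real^3^3" where
  "hat x = matrix (\<lambda>y. cross3 x y)"

definition sdir :: "real^3 \<Rightarrow> real^3 \<Rightarrow> real^3" where
  "sdir p q = (1 / norm (q - p)) *\<^sub>R (q - p)"

definition bvec :: "real^3^3 \<Rightarrow> real^3 \<Rightarrow> real^3" where
  "bvec R s = transpose R *v s"

definition a_coef :: "real^3^3 \<Rightarrow> real^3^3 \<Rightarrow> real^3 \<Rightarrow> real^3 \<Rightarrow> real^3 \<Rightarrow> real^3 \<Rightarrow> real" where
  "a_coef Ri Rj sij sik sji sjk =
     norm (cross3 (bvec Ri sij) (bvec Ri sik)) * norm (cross3 (bvec Rj sji) (bvec Rj sjk))"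

definition Psi_alpha :: "real^3^3 \<Rightarrow> real^3^3 \<Rightarrow> real^3^3 \<Rightarrow> real^3 \<Rightarrow> real^3 \<Rightarrow> real" where
  "Psi_alpha Ri Rj Q sij sji = 1 + (bvec Rj sji) \<bullet> (Q *v bvec Ri sij)"

definition Psi_beta :: "real^3^3 \<Rightarrow> real^3^3 \<Rightarrow> real^3^3 \<Rightarrow> real^3 \<Rightarrow> real^3 \<Rightarrow> real^3 \<Rightarrow> real^3 \<Rightarrow> real" where
  "Psi_beta Ri Rj Q sij sik sji sjk =
     1 + (1 / a_coef Ri Rj sij sik sji sjk) *
         ((cross3 (bvec Rj sji) (bvec Rj sjk)) \<bullet> (Q *v cross3 (bvec Ri sij) (bvec Ri sik)))"

text \<open>e^alpha_ij = (Q^d_ji b_ji) x b_ij, with Q^d_ji = transpose Q.\<close>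
definition e_alpha :: "real^3^3 \<Rightarrow> real^3^3 \<Rightarrow> real^3^3 \<Rightarrow> real^3 \<Rightarrow> real^3 \<Rightarrow> real^3" where
  "e_alpha Ri Rj Q sij sji = cross3 (transpose Q *v bvec Rj sji) (bvec Ri sij)"

definition e_beta :: "real^3^3 \<Rightarrow> real^3^3 \<Rightarrow> real^3^3 \<Rightarrow> real^3 \<Rightarrow> real^3 \<Rightarrow> real^3 \<Rightarrow> real^3 \<Rightarrow> real^3" where
  "e_beta Ri Rj Q sij sik sji sjk =
     (1 / a_coef Ri Rj sij sik sji sjk) *\<^sub>R
       cross3 (transpose Q *v cross3 (bvec Rj sji) (bvec Rj sjk)) (cross3 (bvec Ri sij) (bvec Ri sik))"

definition Psi_pair where
  "Psi_pair ka kb Ri Rj Q sij sik sji sjk =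
     ka * Psi_alpha Ri Rj Q sij sji + kb * Psi_beta Ri Rj Q sij sik sji sjk"

definition e_pair where
  "e_pair ka kb Ri Rj Q sij sik sji sjk =
     ka *\<^sub>R e_alpha Ri Rj Q sij sji + kb *\<^sub>R e_beta Ri Rj Q sij sik sji sjk"

end

theory Submission
  imports Defs
begin

declare transpose_matrix_vector[simp del] vector_transpose_matrix[simp del]


lemma bb_mm: "bounded_bilinear ((**) :: real^3^3 \<Rightarrow> real^3^3 \<Rightarrow> real^3^3)"
  unfolding bilinear_conv_bounded_bilinear[symmetric] bilinear_def
  by (auto simp: linear_iff matrix_matrix_mult_def vec_eq_iff sum.distrib algebra_simps sum_distrib_left)

lemma bb_mv: "bounded_bilinear ((*v) :: real^3^3 \<Rightarrow> real^3 \<Rightarrow> real^3)"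
  unfolding bilinear_conv_bounded_bilinear[symmetric] bilinear_def
  by (auto simp: linear_iff matrix_vector_right_distrib matrix_vector_mult_add_rdistrib  matrix_vector_mult_scaleR scaleR_matrix_vector_assoc)

lemma bb_cross: "bounded_bilinear cross3"
  using bilinear_cross bilinear_conv_bounded_bilinear by blast

lemma bl_transpose: "bounded_linear (transpose :: real^3^3 \<Rightarrow> real^3^3)"
  unfolding linear_conv_bounded_linear[symmetric]
  by (auto simp: linear_iff transpose_def vec_eq_iff)

lemma hat_mv: "hat x *v y = cross3 x y"
proof -
  have "linear (cross3 x)" using bilinear_cross by (simp add: bilinear_def)
  then show ?thesis unfolding hat_def by (simp add: matrix_works)
qed

lemma transpose_hat: "transpose (hat x) = - hat x"
  unfolding hat_def matrix_def transpose_def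
  by (simp add: vec_eq_iff forall_3 cross3_simps axis_def)


lemma dot_mv: "(x::real^3) \<bullet> (A *v y) = (transpose A *v x) \<bullet> y"
  by (simp add: dot_lmul_matrix[symmetric] transpose_matrix_vector)

lemma SO3_rot: "R \<in> SO3 \<Longrightarrow> rotation_matrix R"
  unfolding SO3_def rotation_matrix_def by (simp add: orthogonal_matrix)

lemma rot_transpose: "rotation_matrix R \<Longrightarrow> rotation_matrix (transpose R)"
  unfolding rotation_matrix_def by (simp add: det_transpose)

lemma rot_TQ: "rotation_matrix R \<Longrightarrow> transpose R *v (R *v x) = x"
  unfolding rotation_matrix_def orthogonal_matrix_def by (simp add: matrix_vector_mul_assoc)

lemma rot_QT: "rotation_matrix R \<Longrightarrow> R *v (transpose R *v x) = x"
  unfolding rotation_matrix_def orthogonal_matrix_def by (simp add: matrix_vector_mul_assoc)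

lemma rot_dot: "rotation_matrix R \<Longrightarrow> (R *v x) \<bullet> (R *v y) = (x::real^3) \<bullet> y"
  by (simp add: dot_mv[of "R *v x"] rot_TQ)

lemma rot_norm: "rotation_matrix R \<Longrightarrow> norm (R *v x) = norm (x::real^3)"
  by (simp add: norm_eq_sqrt_inner rot_dot)

lemma rot_cross: "rotation_matrix R \<Longrightarrow> R *v cross3 x y = cross3 (R *v x) (R *v y)"
  by (simp add: cross_rotation_matrix)

lemma triple1: "(x::real^3) \<bullet> cross3 y z = y \<bullet> cross3 z x"
  unfolding cross3_def inner_vec_def sum_3 by (simp add: algebra_simps)
lemma triple2: "(x::real^3) \<bullet> cross3 y z = z \<bullet> cross3 x y"
  unfolding cross3_def inner_vec_def sum_3 by (simp add: algebra_simps)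
lemma jac: "cross3 (cross3 y w) x + cross3 y (cross3 x w) = cross3 (cross3 y x) (w::real^3)"
  unfolding cross3_def by (simp add: vec_eq_iff forall_3 algebra_simps)

lemma norm_cross_le: "norm (cross3 x y) \<le> norm x * norm (y::real^3)"
proof -
  have "(norm (cross3 x y))\<^sup>2 \<le> (norm x * norm y)\<^sup>2" using norm_cross_dot[of x y] zero_le_power2[of "x \<bullet> y"] by linarith
  then show ?thesis by (rule power2_le_imp_le) simp
qed

lemma neg_mv: "(- A) *v x = - (A *v (x::real^3))"
  by (simp add: matrix_vector_mult_def vec_eq_iff sum_negf)


lemma rotvec:
  assumes "(R has_vector_derivative (R t ** hat (W t))) (at t within S)"
  shows "((\<lambda>\<tau>. bvec (R \<tau>) s) has_vector_derivative cross3 (bvec (R t) s) (W t)) (at t within S)"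
proof -
  have 1: "((\<lambda>\<tau>. transpose (R \<tau>)) has_vector_derivative transpose (R t ** hat (W t))) (at t within S)"
    by (rule bounded_linear.has_vector_derivative[OF bl_transpose assms])
  have 2: "((\<lambda>\<tau>. transpose (R \<tau>) *v s) has_vector_derivative
     (transpose (R t) *v 0 + transpose (R t ** hat (W t)) *v s)) (at t within S)"
    by (rule bounded_bilinear.has_vector_derivative[OF bb_mv 1 has_vector_derivative_const])
  have "transpose (R t ** hat (W t)) *v s = - hat (W t) *v (transpose (R t) *v s)"
    by (simp add: matrix_transpose_mul transpose_hat matrix_vector_mul_assoc neg_mv)
  also have "\<dots> = cross3 (bvec (R t) s) (W t)"
    by (simp add: hat_mv bvec_def cross_skew[of "W t"] neg_mv)
  finally show ?thesis using 2 by (simp add: bvec_def)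
qed

lemma rotcross:
  assumes "(X has_vector_derivative cross3 (X t) W) (at t within S)"
    and "(Y has_vector_derivative cross3 (Y t) W) (at t within S)"
  shows "((\<lambda>\<tau>. cross3 (X \<tau>) (Y \<tau>)) has_vector_derivative cross3 (cross3 (X t) (Y t)) W) (at t within S)"
proof -
  have "((\<lambda>\<tau>. cross3 (X \<tau>) (Y \<tau>)) has_vector_derivative
     (cross3 (X t) (cross3 (Y t) W) + cross3 (cross3 (X t) W) (Y t))) (at t within S)"
    by (rule bounded_bilinear.has_vector_derivative[OF bb_cross assms])
  then show ?thesis using jac[of "X t" W "Y t"] by (simp add: add.commute)
qed



lemma cross_diff_l: "cross3 (a - b) c = cross3 a c - cross3 b (c::real^3)"
  unfolding cross3_def by (simp add: vec_eq_iff forall_3 algebra_simps)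
lemma cross_diff_r: "cross3 c (a - b) = cross3 c a - cross3 c (b::real^3)"
  unfolding cross3_def by (simp add: vec_eq_iff forall_3 algebra_simps)

lemma psi_alg:
  fixes q :: "real^3^3"
  assumes rot: "rotation_matrix q" and wq: "wq = wa - transpose q *v wb"
  shows "z \<bullet> (q *v cross3 x w1 + (q ** hat wq) *v x) + cross3 z w2 \<bullet> (q *v x)
       = cross3 (transpose q *v z) x \<bullet> (w1 - wa) + cross3 (q *v x) z \<bullet> (w2 - wb)"
proof -
  define y where "y = transpose q *v z"
  have A: "z \<bullet> (q *v cross3 x w1) = cross3 y x \<bullet> w1"
    using dot_mv[of z q "cross3 x w1"] triple2[of y x w1] by (simp add: y_def inner_commute[of _ w1])
  have B1: "z \<bullet> ((q ** hat wq) *v x) = y \<bullet> cross3 wa x - y \<bullet> cross3 (transpose q *v wb) x"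
    by (simp add: dot_mv[of z] y_def matrix_vector_mul_assoc[symmetric] hat_mv wq cross_diff_l inner_diff_right)
  have B2: "y \<bullet> cross3 wa x = - (cross3 y x \<bullet> wa)"
    using triple1[of y wa x] cross_skew[of x y] by (simp add: inner_commute)
  have rT: "rotation_matrix (transpose q)" using rot by (rule rot_transpose)
  have B3: "y \<bullet> cross3 (transpose q *v wb) x = cross3 (q *v x) z \<bullet> wb"
  proof -
    have "y \<bullet> cross3 (transpose q *v wb) x = (transpose q *v z) \<bullet> (transpose q *v cross3 wb (q *v x))"
      using rot_cross[OF rT, of wb "q *v x"] rot_TQ[OF rot, of x] y_def by simp
    also have "\<dots> = z \<bullet> cross3 wb (q *v x)" by (rule rot_dot[OF rT])
    also have "\<dots> = cross3 (q *v x) z \<bullet> wb" using triple1[of z wb "q *v x"] triple1[of wb "q *v x" z] by (simp add: inner_commute)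
    finally show ?thesis .
  qed
  have Cc: "cross3 z w2 \<bullet> (q *v x) = cross3 (q *v x) z \<bullet> w2"
    using triple2[of "q *v x" z w2] inner_commute[of "cross3 z w2" "q *v x"] inner_commute[of w2] by simp
  show ?thesis
    by (simp add: inner_add_right A B1 B2 B3 Cc inner_diff_right y_def[symmetric])
qed

lemma e_alg:
  fixes q :: "real^3^3"
  assumes rot: "rotation_matrix q" and wq: "wq = wa - transpose q *v wb"
  shows "cross3 (transpose q *v z) (cross3 x w1) + cross3 (transpose q *v cross3 z w2 + transpose (q ** hat wq) *v z) x
    = cross3 (cross3 (transpose q *v z) (transpose q *v (w2 - wb))) x
      + cross3 (transpose q *v z) (cross3 x (w1 - wa)) + cross3 (cross3 (transpose q *v z) x) wa"
proof -
  define y where "y = transpose q *v z"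
  have rT: "rotation_matrix (transpose q)" using rot by (rule rot_transpose)
  have Y1: "transpose q *v cross3 z w2 = cross3 y (transpose q *v w2)"
    using rot_cross[OF rT] y_def by simp
  have Y2: "transpose (q ** hat wq) *v z = cross3 y wa - cross3 y (transpose q *v wb)"
    by (simp add: matrix_transpose_mul transpose_hat matrix_vector_mul_assoc[symmetric] neg_mv hat_mv
       y_def[symmetric] wq cross_diff_r cross_skew[of _ y])
  have J: "cross3 (cross3 y wa) x + cross3 y (cross3 x wa) = cross3 (cross3 y x) wa" by (rule jac)
  have "cross3 y (cross3 x w1) = cross3 y (cross3 x (w1 - wa)) + cross3 y (cross3 x wa)"
    by (simp add: cross_diff_r)
  then show ?thesis
    unfolding y_def[symmetric] Y1 Y2
    using J by (simp add: cross_diff_r cross_diff_l matrix_vector_mult_diff_distrib cross_add_left algebra_simps)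
qed

lemma psi_core:
  fixes X Z :: "real \<Rightarrow> real^3" and Q :: "real \<Rightarrow> real^3^3"
  assumes X: "(X has_vector_derivative cross3 (X t) W1) (at t within S)"
    and Z: "(Z has_vector_derivative cross3 (Z t) W2) (at t within S)"
    and Q: "(Q has_vector_derivative Q t ** hat WQ) (at t within S)"
    and rot: "rotation_matrix (Q t)" and WQ: "WQ = Wa - transpose (Q t) *v Wb"
  shows "((\<lambda>\<tau>. Z \<tau> \<bullet> (Q \<tau> *v X \<tau>)) has_real_derivative
     (cross3 (transpose (Q t) *v Z t) (X t) \<bullet> (W1 - Wa) + cross3 (Q t *v X t) (Z t) \<bullet> (W2 - Wb))) (at t within S)"
proof -
  have 1: "((\<lambda>\<tau>. Q \<tau> *v X \<tau>) has_vector_derivative (Q t *v cross3 (X t) W1 + (Q t ** hat WQ) *v X t)) (at t within S)"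
    by (rule bounded_bilinear.has_vector_derivative[OF bb_mv Q X])
  have 2: "((\<lambda>\<tau>. Z \<tau> \<bullet> (Q \<tau> *v X \<tau>)) has_vector_derivative
     (Z t \<bullet> (Q t *v cross3 (X t) W1 + (Q t ** hat WQ) *v X t) + cross3 (Z t) W2 \<bullet> (Q t *v X t))) (at t within S)"
    by (rule bounded_bilinear.has_vector_derivative[OF bounded_bilinear_inner Z 1])
  show ?thesis
    using 2 psi_alg[OF rot WQ, of "Z t" "X t" W1 W2]
    by (simp add: has_real_derivative_iff_has_vector_derivative)
qed

lemma e_core:
  fixes X Z :: "real \<Rightarrow> real^3" and Q :: "real \<Rightarrow> real^3^3"
  assumes X: "(X has_vector_derivative cross3 (X t) W1) (at t within S)"
    and Z: "(Z has_vector_derivative cross3 (Z t) W2) (at t within S)"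
    and Q: "(Q has_vector_derivative Q t ** hat WQ) (at t within S)"
    and rot: "rotation_matrix (Q t)" and WQ: "WQ = Wa - transpose (Q t) *v Wb"
  shows "((\<lambda>\<tau>. cross3 (transpose (Q \<tau>) *v Z \<tau>) (X \<tau>)) has_vector_derivative
     (cross3 (cross3 (transpose (Q t) *v Z t) (transpose (Q t) *v (W2 - Wb))) (X t)
      + cross3 (transpose (Q t) *v Z t) (cross3 (X t) (W1 - Wa)) + cross3 (cross3 (transpose (Q t) *v Z t) (X t)) Wa))
     (at t within S)"
proof -
  have 0: "((\<lambda>\<tau>. transpose (Q \<tau>)) has_vector_derivative transpose (Q t ** hat WQ)) (at t within S)"
    by (rule bounded_linear.has_vector_derivative[OF bl_transpose Q])
  have 1: "((\<lambda>\<tau>. transpose (Q \<tau>) *v Z \<tau>) has_vector_derivative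
     (transpose (Q t) *v cross3 (Z t) W2 + transpose (Q t ** hat WQ) *v Z t)) (at t within S)"
    by (rule bounded_bilinear.has_vector_derivative[OF bb_mv 0 Z])
  have 2: "((\<lambda>\<tau>. cross3 (transpose (Q \<tau>) *v Z \<tau>) (X \<tau>)) has_vector_derivative
     (cross3 (transpose (Q t) *v Z t) (cross3 (X t) W1) + cross3 (transpose (Q t) *v cross3 (Z t) W2 + transpose (Q t ** hat WQ) *v Z t) (X t))) (at t within S)"
    by (rule bounded_bilinear.has_vector_derivative[OF bb_cross 1 X])
  show ?thesis using 2 e_alg[OF rot WQ, of "Z t" "X t" W1 W2] by simp
qed



locale rotm =
  fixes n11 n12 n13 n21 n22 n23 n31 n32 n33 :: real
  assumes c1: "n11^2 + n21^2 + n31^2 = 1" and c2: "n12^2 + n22^2 + n32^2 = 1" and c3: "n13^2 + n23^2 + n33^2 = 1"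
    and r1: "n11^2 + n12^2 + n13^2 = 1" and r2: "n21^2 + n22^2 + n23^2 = 1" and r3: "n31^2 + n32^2 + n33^2 = 1"
    and o12: "n11*n12 + n21*n22 + n31*n32 = 0" and o13: "n11*n13 + n21*n23 + n31*n33 = 0" and o23: "n12*n13 + n22*n23 + n32*n33 = 0"
    and p12: "n11*n21 + n12*n22 + n13*n23 = 0" and p13: "n11*n31 + n12*n32 + n13*n33 = 0" and p23: "n21*n31 + n22*n32 + n23*n33 = 0"
    and d11: "n11 = n22*n33 - n23*n32" and d22: "n22 = n33*n11 - n31*n13" and d33: "n33 = n11*n22 - n12*n21"
    and d12: "n12 = n23*n31 - n21*n33" and d13: "n13 = n21*n32 - n22*n31"
    and d21: "n21 = n32*n13 - n33*n12" and d23: "n23 = n31*n12 - n32*n11"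
    and d31: "n31 = n12*n23 - n13*n22" and d32: "n32 = n13*n21 - n11*n23"
begin

lemma X3_nonneg: "0 \<le> 1 + n33 - n11 - n22"
proof (rule ccontr)
  assume neg: "\<not> ?thesis"
  have e0: "(1 + n11 + n22 + n33) * (1 + n33 - n11 - n22) = (n21 - n12)^2"
    using c1 c2 c3 r1 r2 r3 d11 d22 d33 by algebra
  have e1: "(1 + n11 - n22 - n33) * (1 + n33 - n11 - n22) = (n13 + n31)^2"
    using c1 c2 c3 r1 r2 r3 d11 d22 d33 o13 p13 by algebra
  have e2: "(1 + n22 - n11 - n33) * (1 + n33 - n11 - n22) = (n23 + n32)^2"
    using c1 c2 c3 r1 r2 r3 d11 d22 d33 o23 p23 by algebra
  have aux: "a \<le> 0" if "a * b = c^2" "b < 0" for a b c :: real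
  proof (rule ccontr)
    assume "\<not> a \<le> 0"
    then have "a * b < 0" using that(2) by (simp add: mult_pos_neg)
    then show False using that(1) zero_le_power2[of c] by linarith
  qed
  have "1 + n11 + n22 + n33 \<le> 0"
    using aux[OF e0] neg by linarith
  moreover have "1 + n11 - n22 - n33 \<le> 0"
    using aux[OF e1] neg by linarith
  moreover have "1 + n22 - n11 - n33 \<le> 0"
    using aux[OF e2] neg by linarith
  ultimately show False using neg by linarith
qed

lemma I1: "(n13 - n31)^2 + (n21 - n12)^2 = 2 * (1 + n11 + n22 + n33) * (1 - n11)"
  using c1 c2 c3 r1 r2 r3 d11 d22 d33 by algebra

lemma I2: "(n32 - n23)^2 + (n21 - n12)^2 = 2 * (1 + n11 + n22 + n33) * (1 - n22)"
  using c1 c2 c3 r1 r2 r3 d11 d22 d33 by algebra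

lemma Edec: "(kb*n32)^2 + (ka*n31)^2 + (ka*n21 - kb*n12)^2
   = (kb^2*(n32-n23)^2 + ka^2*(n31-n13)^2 + (ka+kb)^2*(n21-n12)^2)/4
     + (kb^2*(n32+n23)^2 + ka^2*(n31+n13)^2 + (ka-kb)^2*(n21+n12)^2)/4"
proof -
  have a: "n31^2 + n21^2 = n12^2 + n13^2" using c1 r1 by linarith
  have b: "n12^2 + n32^2 = n21^2 + n23^2" using c2 r2 by linarith
  show ?thesis using a b by algebra
qed

lemma diag_le: "n11 \<le> 1" "n22 \<le> 1"
proof -
  have "n11^2 \<le> 1^2" "n22^2 \<le> 1^2" using c1 c2 zero_le_power2[of n21] zero_le_power2[of n31]
     zero_le_power2[of n12] zero_le_power2[of n32] by (simp_all, linarith+)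
  then show "n11 \<le> 1" "n22 \<le> 1" using power2_le_imp_le[of n11 1] power2_le_imp_le[of n22 1] by simp_all
qed

lemma upper:
  fixes ka kb \<psi> :: real
  assumes ka: "ka > 0" and kb: "kb > 0"
    and hP: "ka*(1-n11) + kb*(1-n22) \<le> \<psi>" and h\<psi>: "\<psi> < 2 * min ka kb"
  shows "ka*(1-n11) + kb*(1-n22) \<le> min ka kb * (ka + kb) / (min (ka\<^sup>2) (kb\<^sup>2) * (2 * min ka kb - \<psi>))
       * ((kb*n32)^2 + (ka*n31)^2 + (ka*n21 - kb*n12)^2)"
proof -
  define m where "m = min ka kb"
  define P where "P = ka*(1-n11) + kb*(1-n22)"
  define E2 where "E2 = (kb*n32)^2 + (ka*n31)^2 + (ka*n21 - kb*n12)^2"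
  define X0 where "X0 = 1 + n11 + n22 + n33"
  have m0: "m > 0" using ka kb by (simp add: m_def)
  have mka: "m \<le> ka" and mkb: "m \<le> kb" by (simp_all add: m_def)
  have m2: "min (ka\<^sup>2) (kb\<^sup>2) = m^2"
  proof (cases "ka \<le> kb")
    case True
    then have "ka^2 \<le> kb^2" using ka by (simp add: power_mono)
    then show ?thesis using True by (simp add: m_def min_def)
  next
    case False
    then have "kb^2 \<le> ka^2" using kb by (simp add: power_mono)
    then show ?thesis using False by (simp add: m_def min_def)
  qed
  have P0: "P \<ge> 0" using diag_le ka kb unfolding P_def
    by (simp add: add_nonneg_nonneg)
  have E20: "E2 \<ge> 0" unfolding E2_def by simp
  have A: "E2 \<ge> (kb^2*(n32-n23)^2 + ka^2*(n31-n13)^2 + (ka+kb)^2*(n21-n12)^2)/4"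
    unfolding E2_def Edec[of kb ka] by simp
  have hl: "mm*(k*x) \<le> k^2*x" if "mm \<le> k" "0 \<le> k" "0 \<le> x" for mm k x :: real
  proof -
    have "mm*(k*x) \<le> k*(k*x)" using that by (simp add: mult_right_mono)
    then show ?thesis by (simp add: power2_eq_square mult.assoc)
  qed
  have t1: "kb^2*(n32-n23)^2 \<ge> m*(kb*(n32-n23)^2)"
    using hl mkb kb by simp
  have t2: "ka^2*(n31-n13)^2 \<ge> m*(ka*(n31-n13)^2)"
    using hl mka ka by simp
  have t3: "(ka+kb)^2*(n21-n12)^2 \<ge> m*((ka+kb)*(n21-n12)^2)"
    using hl[of m "ka+kb" "(n21-n12)^2"] mka ka kb by simp
  have idn: "kb*(n32-n23)^2 + ka*(n31-n13)^2 + (ka+kb)*(n21-n12)^2 = 2*X0*P"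
  proof -
    have "(n31-n13)^2 = (n13-n31)^2" by (simp add: power2_commute)
    then have "kb*(n32-n23)^2 + ka*(n31-n13)^2 + (ka+kb)*(n21-n12)^2
       = ka*((n13 - n31)^2 + (n21 - n12)^2) + kb*((n32 - n23)^2 + (n21 - n12)^2)"
      by (simp add: algebra_simps)
    also have "\<dots> = 2*X0*P" unfolding I1 I2 X0_def P_def by (simp add: algebra_simps)
    finally show ?thesis .
  qed
  have F1: "m*X0*P \<le> 2*E2"
  proof -
    have "m*(kb*(n32-n23)^2 + ka*(n31-n13)^2 + (ka+kb)*(n21-n12)^2) \<le> 4*E2"
      using A t1 t2 t3 by (simp add: algebra_simps)
    then show ?thesis unfolding idn by (simp add: algebra_simps)
  qed
  have F2: "2*m - P \<le> m*X0/2"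
  proof -
    have "P \<ge> m*(2 - n11 - n22)"
    proof -
      have "m*(1-n11) \<le> ka*(1-n11)" using diag_le mka by (simp add: mult_right_mono)
      moreover have "m*(1-n22) \<le> kb*(1-n22)" using diag_le mkb by (simp add: mult_right_mono)
      ultimately show ?thesis unfolding P_def by (simp add: algebra_simps)
    qed
    moreover have "m*(2 - n11 - n22) \<ge> m*(3 - n11 - n22 - n33)/2"
    proof -
      have "0 \<le> m * (1 + n33 - n11 - n22)" using X3_nonneg m0 by simp
      then show ?thesis by (simp add: algebra_simps field_simps)
    qed
    moreover have "m * (1 + n11 + n22 + n33) / 2 = 2*m - m * (3 - n11 - n22 - n33) / 2"
      by (simp add: field_simps)
    ultimately show ?thesis unfolding X0_def by linarith
  qed
  have d0: "2*m - \<psi> > 0" using h\<psi> m_def by simp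
  have "P*m*(2*m - \<psi>) \<le> P*m*(2*m - P)"
    using hP P0 m0 unfolding P_def[symmetric] by (simp add: mult_left_mono)
  also have "\<dots> \<le> P*m*(m*X0/2)"
    using mult_left_mono[OF F2, of "P*m"] P0 m0 by simp
  also have "\<dots> = m*(m*X0*P)/2" by (simp add: algebra_simps)
  also have "\<dots> \<le> m*E2" using F1 m0 by (simp add: mult_left_mono)
  also have "\<dots> \<le> (ka+kb)*E2" using E20 mka kb by (simp add: mult_right_mono)
  finally have key: "P*(m*(2*m - \<psi>)) \<le> (ka+kb)*E2" by (simp add: algebra_simps)
  have pos: "m*(2*m - \<psi>) > 0" using m0 d0 by simp
  have "P \<le> (ka+kb)*E2 / (m*(2*m - \<psi>))"
    using key pos by (simp add: pos_le_divide_eq)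
  also have "\<dots> = m*(ka+kb)/(m^2*(2*m - \<psi>)) * E2"
  proof -
    have "m*(ka+kb)/(m^2*(2*m - \<psi>)) = (ka+kb)/(m*(2*m - \<psi>))"
      using m0 by (simp add: power2_eq_square)
    then show ?thesis by simp
  qed
  finally show ?thesis unfolding P_def E2_def m2 m_def .
qed

end



lemma rot_rotm:
  fixes A :: "real^3^3"
  assumes r: "rotation_matrix A"
  shows "rotm (A$1$1) (A$1$2) (A$1$3) (A$2$1) (A$2$2) (A$2$3) (A$3$1) (A$3$2) (A$3$3)"
proof -
  have o1: "transpose A ** A = mat 1" and o2: "A ** transpose A = mat 1"
    using r by (auto simp: rotation_matrix_def orthogonal_matrix_def)
  have x1: "A *v axis 3 1 = cross3 (A *v axis 1 1) (A *v axis 2 1)"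
    using cross_rotation_matrix[OF r, of "axis 1 1" "axis 2 1"] cross_basis by simp
  have x2: "A *v axis 1 1 = cross3 (A *v axis 2 1) (A *v axis 3 1)"
    using cross_rotation_matrix[OF r, of "axis 2 1" "axis 3 1"] cross_basis by simp
  have x3: "A *v axis 2 1 = cross3 (A *v axis 3 1) (A *v axis 1 1)"
    using cross_rotation_matrix[OF r, of "axis 3 1" "axis 1 1"] cross_basis by simp
  note defs = vec_eq_iff matrix_matrix_mult_def transpose_def mat_def sum_3 forall_3
     matrix_vector_mult_def axis_def cross3_def
  show ?thesis
    apply unfold_locales
    using o1 o2 x1 x2 x3 by (simp_all add: defs power2_eq_square algebra_simps)
qed

lemma vtp: "cross3 a (cross3 b c) = (a \<bullet> c) *\<^sub>R b - (a \<bullet> b) *\<^sub>R (c::real^3)"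
  unfolding cross3_def inner_vec_def sum_3 by (simp add: vec_eq_iff forall_3 algebra_simps)

lemma bridge:
  fixes N :: "real^3^3" and u1 u2 :: "real^3"
  assumes rN: "rotation_matrix N" and n1: "u1 \<bullet> u1 = 1" and n2: "u2 \<bullet> u2 = 1" and o: "u1 \<bullet> u2 = 0"
  shows "\<exists>A::real^3^3. rotation_matrix A \<and> u1 \<bullet> (N *v u1) = A$1$1 \<and> u2 \<bullet> (N *v u2) = A$2$2 \<and>
     (norm (ka *\<^sub>R cross3 u1 (N *v u1) + kb *\<^sub>R cross3 u2 (N *v u2)))^2
       = (kb*A$3$2)^2 + (ka*A$3$1)^2 + (ka*A$2$1 - kb*A$1$2)^2"
proof -
  define u3 where "u3 = cross3 u1 u2"
  have o2: "u2 \<bullet> u1 = 0" using o by (simp add: inner_commute)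
  have o13: "u1 \<bullet> u3 = 0" "u3 \<bullet> u1 = 0" unfolding u3_def by (simp_all add: dot_cross_self inner_commute)
  have o23: "u2 \<bullet> u3 = 0" "u3 \<bullet> u2 = 0" unfolding u3_def by (simp_all add: dot_cross_self inner_commute)
  have c23: "cross3 u2 u3 = u1" unfolding u3_def vtp using n2 o2 by simp
  have n3: "u3 \<bullet> u3 = 1"
  proof -
    have "(norm u3)^2 = 1" using norm_cross_dot[of u1 u2] n1 n2 o
      by (simp add: u3_def norm_eq_sqrt_inner)
    then show ?thesis by (simp add: power2_norm_eq_inner)
  qed
  define P :: "real^3^3" where "P = vector [u1, u2, u3]"
  have Prow: "P$1 = u1" "P$2 = u2" "P$3 = u3" unfolding P_def by simp_all
  have Pv: "P *v y = vector [u1 \<bullet> y, u2 \<bullet> y, u3 \<bullet> y]" for y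
    by (simp add: vec_eq_iff forall_3 matrix_vector_mult_def inner_vec_def Prow)
  have PT: "P ** transpose P = mat 1"
    using n1 n2 n3 o o2 o13 o23
    by (simp add: vec_eq_iff forall_3 matrix_matrix_mult_def transpose_def mat_def inner_vec_def Prow)
  have oP: "orthogonal_matrix P"
    using PT by (simp add: orthogonal_matrix_def matrix_left_right_inverse)
  have dP: "det P = 1"
  proof -
    have "det P = u1 \<bullet> cross3 u2 u3" unfolding P_def by (simp add: dot_cross_det)
    then show ?thesis using c23 n1 by simp
  qed
  have rP: "rotation_matrix P" using oP dP by (simp add: rotation_matrix_def)
  define A where "A = P ** N ** transpose P"
  have rA: "rotation_matrix A" unfolding A_def rotation_matrix_def
    using rN rP by (simp add: rotation_matrix_def orthogonal_matrix_mul det_mul det_transpose)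
  have PTax: "transpose P *v axis 1 1 = u1" "transpose P *v axis 2 1 = u2" "transpose P *v axis 3 1 = u3"
    by (simp_all add: vec_eq_iff forall_3 matrix_vector_mult_def transpose_def axis_def sum_3 Prow)
  have Acol: "A$i$j = (P *v (N *v (transpose P *v axis j 1)))$i" for i j
  proof -
    have "A *v axis j 1 = P *v (N *v (transpose P *v axis j 1))"
      unfolding A_def by (simp add: matrix_vector_mul_assoc matrix_mul_assoc)
    then show ?thesis by (simp add: matrix_vector_mult_basis column_def vec_eq_iff)
  qed
  have Aent: "A$1$1 = u1 \<bullet> (N *v u1)" "A$1$2 = u1 \<bullet> (N *v u2)" "A$1$3 = u1 \<bullet> (N *v u3)"
    "A$2$1 = u2 \<bullet> (N *v u1)" "A$2$2 = u2 \<bullet> (N *v u2)" "A$2$3 = u2 \<bullet> (N *v u3)"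
    "A$3$1 = u3 \<bullet> (N *v u1)" "A$3$2 = u3 \<bullet> (N *v u2)" "A$3$3 = u3 \<bullet> (N *v u3)"
    by (simp_all add: Acol PTax Pv)
  define E where "E = ka *\<^sub>R cross3 u1 (N *v u1) + kb *\<^sub>R cross3 u2 (N *v u2)"
  have PE: "P *v E = ka *\<^sub>R cross3 (P *v u1) (P *v (N *v u1)) + kb *\<^sub>R cross3 (P *v u2) (P *v (N *v u2))"
    unfolding E_def by (simp add: matrix_vector_right_distrib matrix_vector_mult_scaleR rot_cross[OF rP])
  have "(norm E)^2 = (norm (P *v E))^2" using rot_norm[OF rP] by simp
  also have "\<dots> = (kb*A$3$2)^2 + (ka*A$3$1)^2 + (ka*A$2$1 - kb*A$1$2)^2"
  proof -
    have p1: "P *v u1 = vector [1, 0, 0]" "P *v u2 = vector [0, 1, 0]"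
      unfolding Pv using n1 n2 o o2 o13 o23 by simp_all
    have p2: "P *v (N *v u1) = vector [A$1$1, A$2$1, A$3$1]" "P *v (N *v u2) = vector [A$1$2, A$2$2, A$3$2]"
      unfolding Pv Aent by simp_all
    show ?thesis unfolding PE p1 p2 power2_norm_eq_inner
      by (simp add: inner_vec_def sum_3 cross3_def power2_eq_square algebra_simps)
  qed
  finally have "(norm E)^2 = (kb*A$3$2)^2 + (ka*A$3$1)^2 + (ka*A$2$1 - kb*A$1$2)^2" .
  then show ?thesis using rA Aent(1,5) unfolding E_def by (intro exI[of _ A]) simp
qed

lemma cross_unit_bound:
  assumes rN: "rotation_matrix N" and n: "u \<bullet> u = 1"
  shows "(norm (cross3 u (N *v u)))^2 \<le> 2 * (1 - u \<bullet> (N *v u))" and "u \<bullet> (N *v u) \<le> 1"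
proof -
  have nu: "norm u = 1" using n by (simp add: norm_eq_sqrt_inner)
  have nNu: "norm (N *v u) = 1" using rot_norm[OF rN] nu by simp
  have cs: "\<bar>u \<bullet> (N *v u)\<bar> \<le> 1" using Cauchy_Schwarz_ineq2[of u "N *v u"] nu nNu by simp
  then show c1: "u \<bullet> (N *v u) \<le> 1" by simp
  have "(norm (cross3 u (N *v u)))^2 = 1 - (u \<bullet> (N *v u))^2"
    using norm_cross_dot[of u "N *v u"] nu nNu by simp
  also have "\<dots> = (1 - u \<bullet> (N *v u)) * (1 + u \<bullet> (N *v u))" by (simp add: power2_eq_square algebra_simps)
  also have "\<dots> \<le> (1 - u \<bullet> (N *v u)) * 2" using cs c1 by (intro mult_left_mono) auto
  finally show "(norm (cross3 u (N *v u)))^2 \<le> 2 * (1 - u \<bullet> (N *v u))" by simp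
qed

lemma key_iv:
  fixes N :: "real^3^3" and u1 u2 :: "real^3" and ka kb \<psi> :: real
  assumes rN: "rotation_matrix N" and n1: "u1 \<bullet> u1 = 1" and n2: "u2 \<bullet> u2 = 1" and o: "u1 \<bullet> u2 = 0"
    and ka: "ka > 0" and kb: "kb > 0"
  defines "P \<equiv> ka * (1 - u1 \<bullet> (N *v u1)) + kb * (1 - u2 \<bullet> (N *v u2))"
    and "E \<equiv> ka *\<^sub>R cross3 u1 (N *v u1) + kb *\<^sub>R cross3 u2 (N *v u2)"
  shows "min ka kb / (2 * max (max (ka\<^sup>2) (kb\<^sup>2)) ((ka - kb)\<^sup>2) + 2 * (ka + kb)\<^sup>2) * (norm E)\<^sup>2 \<le> P"
    and "P \<le> \<psi> \<and> \<psi> < 2 * min ka kb \<longrightarrow>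
         P \<le> min ka kb * (ka + kb) / (min (ka\<^sup>2) (kb\<^sup>2) * (2 * min ka kb - \<psi>)) * (norm E)\<^sup>2"
proof -
  obtain A :: "real^3^3" where rA: "rotation_matrix A" and a11: "u1 \<bullet> (N *v u1) = A$1$1"
     and a22: "u2 \<bullet> (N *v u2) = A$2$2"
     and aE: "(norm E)^2 = (kb*A$3$2)^2 + (ka*A$3$1)^2 + (ka*A$2$1 - kb*A$1$2)^2"
    using bridge[OF rN n1 n2 o, of ka kb] unfolding E_def by blast
  interpret rotm "A$1$1" "A$1$2" "A$1$3" "A$2$1" "A$2$2" "A$2$3" "A$3$1" "A$3$2" "A$3$3"
    by (rule rot_rotm[OF rA])
  show "P \<le> \<psi> \<and> \<psi> < 2 * min ka kb \<longrightarrow>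
         P \<le> min ka kb * (ka + kb) / (min (ka\<^sup>2) (kb\<^sup>2) * (2 * min ka kb - \<psi>)) * (norm E)\<^sup>2"
    using upper[OF ka kb] unfolding P_def a11 a22 aE by blast
  define \<alpha> where "\<alpha> = norm (cross3 u1 (N *v u1))"
  define \<beta> where "\<beta> = norm (cross3 u2 (N *v u2))"
  have b1: "\<alpha>^2 \<le> 2 * (1 - u1 \<bullet> (N *v u1))" "u1 \<bullet> (N *v u1) \<le> 1"
    using cross_unit_bound[OF rN n1] unfolding \<alpha>_def by auto
  have b2: "\<beta>^2 \<le> 2 * (1 - u2 \<bullet> (N *v u2))" "u2 \<bullet> (N *v u2) \<le> 1"
    using cross_unit_bound[OF rN n2] unfolding \<beta>_def by auto
  have P0: "P \<ge> 0" unfolding P_def using b1(2) b2(2) ka kb by simp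
  have nE: "norm E \<le> ka*\<alpha> + kb*\<beta>"
    unfolding E_def \<alpha>_def \<beta>_def using ka kb
    by (metis (no_types, lifting) abs_of_pos norm_scaleR norm_triangle_ineq)
  have a0: "\<alpha> \<ge> 0" "\<beta> \<ge> 0" unfolding \<alpha>_def \<beta>_def by simp_all
  have "(norm E)^2 \<le> (ka*\<alpha> + kb*\<beta>)^2"
    using nE by (simp add: power_mono)
  also have "\<dots> \<le> (ka+kb)*(ka*\<alpha>^2 + kb*\<beta>^2)"
  proof -
    have "0 \<le> ka*kb*(\<alpha>-\<beta>)^2" using ka kb by simp
    then show ?thesis by (simp add: power2_eq_square algebra_simps)
  qed
  also have "\<dots> \<le> (ka+kb)*(2*P)"
  proof -
    have "ka*\<alpha>^2 + kb*\<beta>^2 \<le> ka*(2 * (1 - u1 \<bullet> (N *v u1))) + kb*(2 * (1 - u2 \<bullet> (N *v u2)))"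
      using b1(1) b2(1) ka kb by (intro add_mono mult_left_mono) auto
    then have "ka*\<alpha>^2 + kb*\<beta>^2 \<le> 2*P" unfolding P_def by (simp add: algebra_simps)
    then show ?thesis using ka kb by (intro mult_left_mono) auto
  qed
  finally have EP: "(norm E)^2 \<le> 2*(ka+kb)*P" by (simp add: algebra_simps)
  define D where "D = 2 * max (max (ka\<^sup>2) (kb\<^sup>2)) ((ka - kb)\<^sup>2) + 2 * (ka + kb)\<^sup>2"
  have mS: "min ka kb \<le> ka + kb" using ka kb by linarith
  have D0: "D \<ge> 2*(ka+kb)^2" unfolding D_def by (simp add: max_def)
  have Dp: "D > 0" using D0 ka kb by (smt (verit) zero_less_power)
  have "min ka kb / D * (norm E)^2 \<le> min ka kb / D * (2*(ka+kb)*P)"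
    using EP ka kb Dp by (intro mult_left_mono) auto
  also have "\<dots> \<le> P"
  proof -
    have "min ka kb * (2*(ka+kb)) \<le> (ka+kb)*(2*(ka+kb))" using mS ka kb by (intro mult_right_mono) auto
    also have "\<dots> \<le> D" using D0 by (simp add: power2_eq_square algebra_simps)
    finally have "min ka kb * (2*(ka+kb)) \<le> D" .
    then have "min ka kb * (2*(ka+kb)) / D \<le> 1" using Dp by simp
    then have "min ka kb * (2*(ka+kb)) / D * P \<le> P" using P0 mult_left_le_one_le[of P "min ka kb * (2*(ka+kb)) / D"] Dp mS ka kb
      by (simp del: times_divide_eq_left)
    moreover have "min ka kb / D * (2*(ka+kb)*P) = min ka kb * (2*(ka+kb)) / D * P" by simp
    ultimately show ?thesis by linarith
  qed
  finally show "min ka kb / (2 * max (max (ka\<^sup>2) (kb\<^sup>2)) ((ka - kb)\<^sup>2) + 2 * (ka + kb)\<^sup>2) * (norm E)\<^sup>2 \<le> P"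
    unfolding D_def .
qed



lemma sdir_norm: "p \<noteq> q \<Longrightarrow> sdir p q \<bullet> sdir p q = 1"
  unfolding sdir_def by (simp add: inner_scaleR_left inner_scaleR_right power2_norm_eq_inner[symmetric] power2_eq_square)

lemma geom:
  fixes p1 p2 p3 :: "real^3"
  assumes nc: "\<not> collinear {p1, p2, p3}"
  shows "sdir p1 p2 \<bullet> sdir p1 p2 = 1" "sdir p2 p1 = - sdir p1 p2"
    and "cross3 (sdir p1 p2) (sdir p1 p3) \<noteq> 0"
    and "\<exists>\<mu>>0. cross3 (sdir p2 p1) (sdir p2 p3) = - \<mu> *\<^sub>R cross3 (sdir p1 p2) (sdir p1 p3)"
proof -
  have ne: "p1 \<noteq> p2" "p1 \<noteq> p3" "p2 \<noteq> p3"
    using nc by (auto simp: insert_commute)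
  show "sdir p1 p2 \<bullet> sdir p1 p2 = 1" using ne by (simp add: sdir_norm)
  show "sdir p2 p1 = - sdir p1 p2" unfolding sdir_def
    by (simp add: norm_minus_commute[of p1 p2] scaleR_right_diff_distrib)
  have c0: "cross3 (p1 - p2) (p3 - p2) \<noteq> 0"
    using nc collinear_3[of p1 p2 p3] cross_eq_0 by auto
  have neg: "cross3 (p1 - p2) (p3 - p2) = - cross3 (p2 - p1) (p3 - p1)"
    unfolding cross3_def by (simp add: vec_eq_iff forall_3 algebra_simps)
  have c1: "cross3 (p2 - p1) (p3 - p1) \<noteq> 0" using c0 neg by simp
  have n12: "norm (p2 - p1) > 0" "norm (p1 - p2) > 0" "norm (p3 - p1) > 0" "norm (p3 - p2) > 0"
    using ne by auto
  have w: "cross3 (sdir p1 p2) (sdir p1 p3) = (1/(norm (p2 - p1) * norm (p3 - p1))) *\<^sub>R cross3 (p2 - p1) (p3 - p1)"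
    unfolding sdir_def by (simp add: cross_mult_left cross_mult_right)
  have w': "cross3 (sdir p2 p1) (sdir p2 p3) = (1/(norm (p1 - p2) * norm (p3 - p2))) *\<^sub>R cross3 (p1 - p2) (p3 - p2)"
    unfolding sdir_def by (simp add: cross_mult_left cross_mult_right)
  show "cross3 (sdir p1 p2) (sdir p1 p3) \<noteq> 0" using w c1 n12 by simp
  define \<mu> where "\<mu> = norm (p3 - p1) / norm (p3 - p2)"
  have "\<mu> > 0" using n12 by (simp add: \<mu>_def)
  moreover have "cross3 (sdir p2 p1) (sdir p2 p3) = - \<mu> *\<^sub>R cross3 (sdir p1 p2) (sdir p1 p3)"
    unfolding w w' neg \<mu>_def using n12 by (simp add: norm_minus_commute[of p1 p2])
  ultimately show "\<exists>\<mu>>0. cross3 (sdir p2 p1) (sdir p2 p3) = - \<mu> *\<^sub>R cross3 (sdir p1 p2) (sdir p1 p3)" by blast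
qed

lemma mv_neg: "A *v (- x) = - (A *v (x::real^3))"
  by (simp add: matrix_vector_mult_def vec_eq_iff sum_negf)

lemma rep:
  fixes R1 R2 Q :: "real^3^3" and a b :: "real^3"
  assumes r1: "rotation_matrix R1" and r2: "rotation_matrix R2" and rq: "rotation_matrix Q"
    and b: "b = - \<mu> *\<^sub>R a" and \<mu>: "\<mu> > 0" and a0: "a \<noteq> 0"
  defines "N \<equiv> R1 ** transpose Q ** transpose R2"
    and "u \<equiv> (1 / norm a) *\<^sub>R a"
    and "\<kappa> \<equiv> 1 / (norm a * norm b)"
  shows "1 + \<kappa> * ((transpose R2 *v b) \<bullet> (Q *v (transpose R1 *v a))) = 1 - u \<bullet> (N *v u)"
    and "\<kappa> *\<^sub>R cross3 (transpose Q *v (transpose R2 *v b)) (transpose R1 *v a) = transpose R1 *v cross3 u (N *v u)"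
    and "rotation_matrix N"
proof -
  have na: "norm a > 0" using a0 by simp
  have nb: "norm b = \<mu> * norm a" using b \<mu> by simp
  have tN: "transpose N = R2 ** Q ** transpose R1"
    unfolding N_def by (simp add: matrix_transpose_mul matrix_mul_assoc)
  have "(transpose R2 *v b) \<bullet> (Q *v (transpose R1 *v a)) = b \<bullet> (R2 *v (Q *v (transpose R1 *v a)))"
    using dot_mv[of b R2] by simp
  also have "\<dots> = b \<bullet> (transpose N *v a)" by (simp add: tN matrix_vector_mul_assoc matrix_mul_assoc)
  also have "\<dots> = (N *v b) \<bullet> a" by (simp add: dot_mv)
  also have "\<dots> = - \<mu> * ((N *v a) \<bullet> a)" by (simp add: b matrix_vector_mult_scaleR mv_neg)
  finally have e1: "(transpose R2 *v b) \<bullet> (Q *v (transpose R1 *v a)) = - \<mu> * ((N *v a) \<bullet> a)" .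
  have "u \<bullet> (N *v u) = (1/norm a)^2 * (a \<bullet> (N *v a))"
    unfolding u_def by (simp add: matrix_vector_mult_scaleR power2_eq_square)
  then show "1 + \<kappa> * ((transpose R2 *v b) \<bullet> (Q *v (transpose R1 *v a))) = 1 - u \<bullet> (N *v u)"
    unfolding e1 \<kappa>_def nb using na \<mu> by (simp add: inner_commute power2_eq_square field_simps)
  have rTR1: "rotation_matrix (transpose R1)" using r1 by (rule rot_transpose)
  have "transpose Q *v (transpose R2 *v b) = transpose R1 *v (N *v b)"
    unfolding N_def using rot_TQ[OF r1] by (simp add: matrix_vector_mul_assoc[symmetric])
  then have "\<kappa> *\<^sub>R cross3 (transpose Q *v (transpose R2 *v b)) (transpose R1 *v a)
      = transpose R1 *v (\<kappa> *\<^sub>R cross3 (N *v b) a)"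
    by (simp add: rot_cross[OF rTR1] matrix_vector_mult_scaleR)
  also have "\<kappa> *\<^sub>R cross3 (N *v b) a = cross3 u (N *v u)"
  proof -
    have "cross3 (N *v b) a = \<mu> *\<^sub>R cross3 a (N *v a)"
      by (simp add: b matrix_vector_mult_scaleR mv_neg cross_mult_left cross_skew[of "N *v a" a])
    then show ?thesis unfolding u_def \<kappa>_def nb using na \<mu>
      by (simp add: matrix_vector_mult_scaleR cross_mult_left cross_mult_right power2_eq_square)
  qed
  finally show "\<kappa> *\<^sub>R cross3 (transpose Q *v (transpose R2 *v b)) (transpose R1 *v a) = transpose R1 *v cross3 u (N *v u)" .
  show "rotation_matrix N" unfolding N_def rotation_matrix_def
    using r1 r2 rq by (simp add: rotation_matrix_def orthogonal_matrix_mul det_mul det_transpose)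
qed

lemma e_swap:
  assumes rq: "rotation_matrix Q"
  shows "cross3 (transpose Q *v z) x = - (transpose Q *v cross3 (transpose (transpose Q) *v x) z)"
proof -
  have rT: "rotation_matrix (transpose Q)" using rq by (rule rot_transpose)
  have "transpose Q *v cross3 (Q *v x) z = cross3 x (transpose Q *v z)"
    using rot_cross[OF rT, of "Q *v x" z] rot_TQ[OF rq, of x] by simp
  then show ?thesis by (simp add: cross_skew[of x])
qed

lemma Qt_kin:
  assumes Q: "(Q has_vector_derivative Q t ** hat W) (at t within S)" and rq: "rotation_matrix (Q t)"
  shows "((\<lambda>\<tau>. transpose (Q \<tau>)) has_vector_derivative transpose (Q t) ** hat (- (Q t *v W))) (at t within S)"
proof -
  have rT: "rotation_matrix (transpose (Q t))" using rq by (rule rot_transpose)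
  have eq: "transpose (Q t ** hat W) = transpose (Q t) ** hat (- (Q t *v W))"
    unfolding matrix_eq
  proof
    fix x
    have "transpose (Q t ** hat W) *v x = - cross3 W (transpose (Q t) *v x)"
      by (simp add: matrix_transpose_mul transpose_hat matrix_vector_mul_assoc[symmetric] neg_mv hat_mv)
    moreover have "(transpose (Q t) ** hat (- (Q t *v W))) *v x = - cross3 W (transpose (Q t) *v x)"
      using rot_cross[OF rT, of "Q t *v W" "Q t *v (transpose (Q t) *v x)"] rot_TQ[OF rq, of W] rot_QT[OF rq, of x]
      by (simp add: matrix_vector_mul_assoc[symmetric] hat_mv mv_neg)
    ultimately show "transpose (Q t ** hat W) *v x = (transpose (Q t) ** hat (- (Q t *v W))) *v x" by simp
  qed
  show ?thesis using bounded_linear.has_vector_derivative[OF bl_transpose Q] eq by simp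
qed

lemma pbound:
  fixes q :: "real^3^3"
  assumes rq: "rotation_matrix q" and c: "c \<ge> 0" and one: "c * (norm Y * norm X) = 1"
  shows "norm (c *\<^sub>R (cross3 (cross3 Y (transpose q *v e2)) X + cross3 Y (cross3 X e1))) \<le> norm e1 + norm e2"
proof -
  have rT: "rotation_matrix (transpose q)" using rq by (rule rot_transpose)
  have k1: "norm (cross3 (cross3 Y (transpose q *v e2)) X) \<le> norm Y * norm e2 * norm X"
  proof -
    have "norm (cross3 (cross3 Y (transpose q *v e2)) X) \<le> norm (cross3 Y (transpose q *v e2)) * norm X"
      by (rule norm_cross_le)
    also have "\<dots> \<le> (norm Y * norm e2) * norm X"
      using norm_cross_le[of Y "transpose q *v e2"] rot_norm[OF rT, of e2] by (intro mult_right_mono) auto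
    finally show ?thesis .
  qed
  have k2: "norm (cross3 Y (cross3 X e1)) \<le> norm Y * (norm X * norm e1)"
  proof -
    have "norm (cross3 Y (cross3 X e1)) \<le> norm Y * norm (cross3 X e1)" by (rule norm_cross_le)
    also have "\<dots> \<le> norm Y * (norm X * norm e1)" using norm_cross_le[of X e1] by (intro mult_left_mono) auto
    finally show ?thesis .
  qed
  have "norm (cross3 (cross3 Y (transpose q *v e2)) X + cross3 Y (cross3 X e1))
     \<le> norm (cross3 (cross3 Y (transpose q *v e2)) X) + norm (cross3 Y (cross3 X e1))"
    by (rule norm_triangle_ineq)
  also have "\<dots> \<le> (norm Y * norm X) * (norm e1 + norm e2)"
    using k1 k2 by (simp add: algebra_simps)
  finally have "norm (cross3 (cross3 Y (transpose q *v e2)) X + cross3 Y (cross3 X e1))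
     \<le> (norm Y * norm X) * (norm e1 + norm e2)" .
  then have "c * norm (cross3 (cross3 Y (transpose q *v e2)) X + cross3 Y (cross3 X e1))
     \<le> c * ((norm Y * norm X) * (norm e1 + norm e2))"
    using c by (rule mult_left_mono)
  then show ?thesis using c one by (simp add: mult.assoc[symmetric])
qed



theorem proposition1:
  fixes p1 p2 p3 :: "real^3"
    and R1 R2 Qd :: "real \<Rightarrow> real^3^3"
    and \<Omega>1 \<Omega>2 \<Omega>d1 \<Omega>d2 \<Omega>d12 \<Omega>d1' \<Omega>d2' :: "real \<Rightarrow> real^3"
    and ka kb Bd \<psi> :: real
  assumes noncol: "\<not> collinear {p1, p2, p3}"
    and R1_SO3: "\<And>t. t \<ge> 0 \<Longrightarrow> R1 t \<in> SO3"
    and R2_SO3: "\<And>t. t \<ge> 0 \<Longrightarrow> R2 t \<in> SO3"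
    and R1_kin: "\<And>t. t \<ge> 0 \<Longrightarrow> (R1 has_vector_derivative (R1 t ** hat (\<Omega>1 t))) (at t within {0..})"
    and R2_kin: "\<And>t. t \<ge> 0 \<Longrightarrow> (R2 has_vector_derivative (R2 t ** hat (\<Omega>2 t))) (at t within {0..})"
    and Qd_SO3: "\<And>t. t \<ge> 0 \<Longrightarrow> Qd t \<in> SO3"
    and Qd_kin: "\<And>t. t \<ge> 0 \<Longrightarrow> (Qd has_vector_derivative (Qd t ** hat (\<Omega>d12 t))) (at t within {0..})"
    and Od1_C1: "\<And>t. t \<ge> 0 \<Longrightarrow> (\<Omega>d1 has_vector_derivative \<Omega>d1' t) (at t within {0..})"
    and Od1'_cont: "continuous_on {0..} \<Omega>d1'"
    and Od2_C1: "\<And>t. t \<ge> 0 \<Longrightarrow> (\<Omega>d2 has_vector_derivative \<Omega>d2' t) (at t within {0..})"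
    and Od2'_cont: "continuous_on {0..} \<Omega>d2'"
    and Od12: "\<And>t. t \<ge> 0 \<Longrightarrow> \<Omega>d12 t = \<Omega>d1 t - transpose (Qd t) *v \<Omega>d2 t"
    and Bd_pos: "Bd > 0"
    and Od1_bd: "\<And>t. t \<ge> 0 \<Longrightarrow> norm (\<Omega>d1 t) \<le> Bd"
    and Od2_bd: "\<And>t. t \<ge> 0 \<Longrightarrow> norm (\<Omega>d2 t) \<le> Bd"
    and ka_pos: "ka > 0" and kb_pos: "kb > 0" and ka_ne_kb: "ka \<noteq> kb"
  shows "\<forall>t\<ge>0.
    (let s12 = sdir p1 p2; s13 = sdir p1 p3; s21 = sdir p2 p1; s23 = sdir p2 p3;
         Psi12 = (\<lambda>\<tau>. Psi_pair ka kb (R1 \<tau>) (R2 \<tau>) (Qd \<tau>) s12 s13 s21 s23);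
         e12 = (\<lambda>\<tau>. e_pair ka kb (R1 \<tau>) (R2 \<tau>) (Qd \<tau>) s12 s13 s21 s23);
         e21 = (\<lambda>\<tau>. e_pair ka kb (R2 \<tau>) (R1 \<tau>) (transpose (Qd \<tau>)) s21 s23 s12 s13);
         eO1 = \<Omega>1 t - \<Omega>d1 t;
         eO2 = \<Omega>2 t - \<Omega>d2 t
     in
       e12 t = - (transpose (Qd t) *v e21 t) \<and> norm (e12 t) = norm (e21 t)
     \<and> (Psi12 has_real_derivative (e12 t \<bullet> eO1 + e21 t \<bullet> eO2)) (at t within {0..})
     \<and> (\<exists>v. (e12 has_vector_derivative v) (at t within {0..}) \<and>
            norm v \<le> (ka + kb) * (norm eO1 + norm eO2) + Bd * norm (e12 t))
     \<and> (\<exists>v. (e21 has_vector_derivative v) (at t within {0..}) \<and>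
            norm v \<le> (ka + kb) * (norm eO1 + norm eO2) + Bd * norm (e21 t))
     \<and> (Psi12 t \<le> \<psi> \<and> \<psi> < 2 * min ka kb \<longrightarrow>
          min ka kb / (2 * max (max (ka\<^sup>2) (kb\<^sup>2)) ((ka - kb)\<^sup>2) + 2 * (ka + kb)\<^sup>2)
            * (norm (e12 t))\<^sup>2 \<le> Psi12 t
        \<and> Psi12 t \<le> min ka kb * (ka + kb) / (min (ka\<^sup>2) (kb\<^sup>2) * (2 * min ka kb - \<psi>))
            * (norm (e12 t))\<^sup>2))"
proof (intro allI impI)
  fix t :: real assume t0: "t \<ge> 0"
  define s12 where "s12 = sdir p1 p2"
  define s13 where "s13 = sdir p1 p3"
  define s21 where "s21 = sdir p2 p1"
  define s23 where "s23 = sdir p2 p3"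
  define w where "w = cross3 s12 s13"
  define w' where "w' = cross3 s21 s23"
  have hs12: "s12 \<bullet> s12 = 1" and hs21: "s21 = - s12" and w0: "w \<noteq> 0"
    using geom[OF noncol] unfolding s12_def s13_def s21_def w_def by auto
  obtain \<mu> where \<mu>: "\<mu> > 0" and hw': "w' = - \<mu> *\<^sub>R w"
    using geom(4)[OF noncol] unfolding w_def w'_def s12_def s13_def s21_def s23_def by blast
  have ns12: "norm s12 = 1" using hs12 by (simp add: norm_eq_sqrt_inner)
  have ns21: "norm s21 = 1" using ns12 hs21 by simp
  define a0 where "a0 = norm w * norm w'"
  have a0p: "a0 > 0" using w0 \<mu> hw' by (simp add: a0_def)
  have rot1: "\<And>\<tau>. \<tau> \<ge> 0 \<Longrightarrow> rotation_matrix (R1 \<tau>)" using R1_SO3 SO3_rot by blast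
  have rot2: "\<And>\<tau>. \<tau> \<ge> 0 \<Longrightarrow> rotation_matrix (R2 \<tau>)" using R2_SO3 SO3_rot by blast
  have rotQ: "\<And>\<tau>. \<tau> \<ge> 0 \<Longrightarrow> rotation_matrix (Qd \<tau>)" using Qd_SO3 SO3_rot by blast
  define B12 where "B12 = (\<lambda>\<tau>. bvec (R1 \<tau>) s12)"
  define B13 where "B13 = (\<lambda>\<tau>. bvec (R1 \<tau>) s13)"
  define B21 where "B21 = (\<lambda>\<tau>. bvec (R2 \<tau>) s21)"
  define B23 where "B23 = (\<lambda>\<tau>. bvec (R2 \<tau>) s23)"
  define C1 where "C1 = (\<lambda>\<tau>. cross3 (B12 \<tau>) (B13 \<tau>))"
  define C2 where "C2 = (\<lambda>\<tau>. cross3 (B21 \<tau>) (B23 \<tau>))"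
  have C1w: "\<And>\<tau>. \<tau> \<ge> 0 \<Longrightarrow> C1 \<tau> = transpose (R1 \<tau>) *v w"
    unfolding C1_def B12_def B13_def bvec_def w_def using rot1 rot_transpose rot_cross by metis
  have C2w: "\<And>\<tau>. \<tau> \<ge> 0 \<Longrightarrow> C2 \<tau> = transpose (R2 \<tau>) *v w'"
    unfolding C2_def B21_def B23_def bvec_def w'_def using rot2 rot_transpose rot_cross by metis
  have nC1: "\<And>\<tau>. \<tau> \<ge> 0 \<Longrightarrow> norm (C1 \<tau>) = norm w"
    using C1w rot1 rot_transpose rot_norm by metis
  have nC2: "\<And>\<tau>. \<tau> \<ge> 0 \<Longrightarrow> norm (C2 \<tau>) = norm w'"
    using C2w rot2 rot_transpose rot_norm by metis
  have nB12: "\<And>\<tau>. \<tau> \<ge> 0 \<Longrightarrow> norm (B12 \<tau>) = 1"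
    unfolding B12_def bvec_def using rot1 rot_transpose rot_norm ns12 by metis
  have nB21: "\<And>\<tau>. \<tau> \<ge> 0 \<Longrightarrow> norm (B21 \<tau>) = 1"
    unfolding B21_def bvec_def using rot2 rot_transpose rot_norm ns21 by metis
  have ac1: "\<And>\<tau>. \<tau> \<ge> 0 \<Longrightarrow> a_coef (R1 \<tau>) (R2 \<tau>) s12 s13 s21 s23 = a0"
    unfolding a_coef_def a0_def using nC1 nC2 unfolding C1_def C2_def B12_def B13_def B21_def B23_def by simp
  have ac2: "\<And>\<tau>. \<tau> \<ge> 0 \<Longrightarrow> a_coef (R2 \<tau>) (R1 \<tau>) s21 s23 s12 s13 = a0"
    unfolding a_coef_def a0_def using nC1 nC2 unfolding C1_def C2_def B12_def B13_def B21_def B23_def by (simp add: mult.commute)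
  define F where "F = (\<lambda>\<tau>. ka * (1 + B21 \<tau> \<bullet> (Qd \<tau> *v B12 \<tau>)) + kb * (1 + (1/a0) * (C2 \<tau> \<bullet> (Qd \<tau> *v C1 \<tau>))))"
  define G12 where "G12 = (\<lambda>\<tau>. ka *\<^sub>R cross3 (transpose (Qd \<tau>) *v B21 \<tau>) (B12 \<tau>)
      + kb *\<^sub>R ((1/a0) *\<^sub>R cross3 (transpose (Qd \<tau>) *v C2 \<tau>) (C1 \<tau>)))"
  define G21 where "G21 = (\<lambda>\<tau>. ka *\<^sub>R cross3 (transpose (transpose (Qd \<tau>)) *v B12 \<tau>) (B21 \<tau>)
      + kb *\<^sub>R ((1/a0) *\<^sub>R cross3 (transpose (transpose (Qd \<tau>)) *v C1 \<tau>) (C2 \<tau>)))"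
  have eqF: "\<And>\<tau>. \<tau> \<ge> 0 \<Longrightarrow> Psi_pair ka kb (R1 \<tau>) (R2 \<tau>) (Qd \<tau>) s12 s13 s21 s23 = F \<tau>"
    unfolding Psi_pair_def Psi_alpha_def Psi_beta_def F_def using ac1
    by (simp add: C1_def C2_def B12_def B13_def B21_def B23_def)
  have eqG12: "\<And>\<tau>. \<tau> \<ge> 0 \<Longrightarrow> e_pair ka kb (R1 \<tau>) (R2 \<tau>) (Qd \<tau>) s12 s13 s21 s23 = G12 \<tau>"
    unfolding e_pair_def e_alpha_def e_beta_def G12_def using ac1
    by (simp add: C1_def C2_def B12_def B13_def B21_def B23_def)
  have eqG21: "\<And>\<tau>. \<tau> \<ge> 0 \<Longrightarrow> e_pair ka kb (R2 \<tau>) (R1 \<tau>) (transpose (Qd \<tau>)) s21 s23 s12 s13 = G21 \<tau>"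
    unfolding e_pair_def e_alpha_def e_beta_def G21_def using ac2
    by (simp add: C1_def C2_def B12_def B13_def B21_def B23_def del: transpose_transpose)

  have rQt: "rotation_matrix (Qd t)" using rotQ[OF t0] .
  have rQT: "rotation_matrix (transpose (Qd t))" using rQt by (rule rot_transpose)
  have i1: "G12 t = - (transpose (Qd t) *v G21 t)"
  proof -
    have x1: "cross3 (transpose (Qd t) *v B21 t) (B12 t) = - (transpose (Qd t) *v cross3 (transpose (transpose (Qd t)) *v B12 t) (B21 t))"
      by (rule e_swap[OF rQt])
    have x2: "cross3 (transpose (Qd t) *v C2 t) (C1 t) = - (transpose (Qd t) *v cross3 (transpose (transpose (Qd t)) *v C1 t) (C2 t))"
      by (rule e_swap[OF rQt])
    show ?thesis unfolding G12_def G21_def x1 x2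
      by (simp only: matrix_vector_right_distrib matrix_vector_mult_scaleR scaleR_minus_right minus_add_distrib)
  qed
  have i2: "norm (G12 t) = norm (G21 t)"
    using i1 rot_norm[OF rQT, of "G21 t"] by simp
  have dB12: "(B12 has_vector_derivative cross3 (B12 t) (\<Omega>1 t)) (at t within {0..})"
    unfolding B12_def by (rule rotvec[where W=\<Omega>1, OF R1_kin[OF t0]])
  have dB13: "(B13 has_vector_derivative cross3 (B13 t) (\<Omega>1 t)) (at t within {0..})"
    unfolding B13_def by (rule rotvec[where W=\<Omega>1, OF R1_kin[OF t0]])
  have dB21: "(B21 has_vector_derivative cross3 (B21 t) (\<Omega>2 t)) (at t within {0..})"
    unfolding B21_def by (rule rotvec[where W=\<Omega>2, OF R2_kin[OF t0]])
  have dB23: "(B23 has_vector_derivative cross3 (B23 t) (\<Omega>2 t)) (at t within {0..})"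
    unfolding B23_def by (rule rotvec[where W=\<Omega>2, OF R2_kin[OF t0]])
  have dC1: "(C1 has_vector_derivative cross3 (C1 t) (\<Omega>1 t)) (at t within {0..})"
    using rotcross[OF dB12 dB13] unfolding C1_def .
  have dC2: "(C2 has_vector_derivative cross3 (C2 t) (\<Omega>2 t)) (at t within {0..})"
    using rotcross[OF dB21 dB23] unfolding C2_def .
  note Qk = Qd_kin[OF t0] and WQ = Od12[OF t0]
  define dAv where "dAv = cross3 (transpose (Qd t) *v B21 t) (B12 t) \<bullet> (\<Omega>1 t - \<Omega>d1 t) + cross3 (Qd t *v B12 t) (B21 t) \<bullet> (\<Omega>2 t - \<Omega>d2 t)"
  define dBv where "dBv = cross3 (transpose (Qd t) *v C2 t) (C1 t) \<bullet> (\<Omega>1 t - \<Omega>d1 t) + cross3 (Qd t *v C1 t) (C2 t) \<bullet> (\<Omega>2 t - \<Omega>d2 t)"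
  have dA: "((\<lambda>\<tau>. B21 \<tau> \<bullet> (Qd \<tau> *v B12 \<tau>)) has_real_derivative dAv) (at t within {0..})"
    unfolding dAv_def by (rule psi_core[OF dB12 dB21 Qk rQt WQ])
  have dBB: "((\<lambda>\<tau>. C2 \<tau> \<bullet> (Qd \<tau> *v C1 \<tau>)) has_real_derivative dBv) (at t within {0..})"
    unfolding dBv_def by (rule psi_core[OF dC1 dC2 Qk rQt WQ])
  have dF: "(F has_real_derivative (ka * (0 + dAv) + kb * (0 + (1/a0) * dBv))) (at t within {0..})"
    unfolding F_def by (intro DERIV_add DERIV_cmult DERIV_const dA dBB)
  have dFv: "ka * (0 + dAv) + kb * (0 + (1/a0) * dBv) = G12 t \<bullet> (\<Omega>1 t - \<Omega>d1 t) + G21 t \<bullet> (\<Omega>2 t - \<Omega>d2 t)"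
    unfolding dAv_def dBv_def G12_def G21_def by (simp add: inner_add_left algebra_simps)

  define YA where "YA = transpose (Qd t) *v B21 t"
  define YB where "YB = transpose (Qd t) *v C2 t"
  define pA where "pA = cross3 (cross3 YA (transpose (Qd t) *v (\<Omega>2 t - \<Omega>d2 t))) (B12 t) + cross3 YA (cross3 (B12 t) (\<Omega>1 t - \<Omega>d1 t))"
  define pB where "pB = cross3 (cross3 YB (transpose (Qd t) *v (\<Omega>2 t - \<Omega>d2 t))) (C1 t) + cross3 YB (cross3 (C1 t) (\<Omega>1 t - \<Omega>d1 t))"
  have dEA: "((\<lambda>\<tau>. cross3 (transpose (Qd \<tau>) *v B21 \<tau>) (B12 \<tau>)) has_vector_derivative
      pA + cross3 (cross3 YA (B12 t)) (\<Omega>d1 t)) (at t within {0..})"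
    unfolding pA_def YA_def by (rule e_core[OF dB12 dB21 Qk rQt WQ])
  have dEB: "((\<lambda>\<tau>. cross3 (transpose (Qd \<tau>) *v C2 \<tau>) (C1 \<tau>)) has_vector_derivative
      pB + cross3 (cross3 YB (C1 t)) (\<Omega>d1 t)) (at t within {0..})"
    unfolding pB_def YB_def by (rule e_core[OF dC1 dC2 Qk rQt WQ])
  have dG12: "(G12 has_vector_derivative
      (ka *\<^sub>R (pA + cross3 (cross3 YA (B12 t)) (\<Omega>d1 t)) + kb *\<^sub>R ((1/a0) *\<^sub>R (pB + cross3 (cross3 YB (C1 t)) (\<Omega>d1 t)))))
      (at t within {0..})"
    unfolding G12_def
    by (intro has_vector_derivative_add bounded_linear.has_vector_derivative[OF bounded_linear_scaleR_right] dEA dEB)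
  have v12: "ka *\<^sub>R (pA + cross3 (cross3 YA (B12 t)) (\<Omega>d1 t)) + kb *\<^sub>R ((1/a0) *\<^sub>R (pB + cross3 (cross3 YB (C1 t)) (\<Omega>d1 t)))
     = ka *\<^sub>R pA + kb *\<^sub>R ((1/a0) *\<^sub>R pB) + cross3 (G12 t) (\<Omega>d1 t)"
    unfolding G12_def YA_def YB_def by (simp add: cross_add_left cross_mult_left algebra_simps)
  have bA: "norm (1 *\<^sub>R pA) \<le> norm (\<Omega>1 t - \<Omega>d1 t) + norm (\<Omega>2 t - \<Omega>d2 t)"
    unfolding pA_def by (rule pbound[OF rQt]) (simp_all add: YA_def rot_norm[OF rQT] nB12[OF t0] nB21[OF t0])
  have bB: "norm ((1/a0) *\<^sub>R pB) \<le> norm (\<Omega>1 t - \<Omega>d1 t) + norm (\<Omega>2 t - \<Omega>d2 t)"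
    unfolding pB_def by (rule pbound[OF rQt]) (use a0p w0 \<mu> hw' in \<open>simp_all add: YB_def rot_norm[OF rQT] nC1[OF t0] nC2[OF t0] a0_def\<close>)
  have iii12: "norm (ka *\<^sub>R (pA + cross3 (cross3 YA (B12 t)) (\<Omega>d1 t)) + kb *\<^sub>R ((1/a0) *\<^sub>R (pB + cross3 (cross3 YB (C1 t)) (\<Omega>d1 t))))
     \<le> (ka + kb) * (norm (\<Omega>1 t - \<Omega>d1 t) + norm (\<Omega>2 t - \<Omega>d2 t)) + Bd * norm (G12 t)"
  proof -
    let ?n = "norm (\<Omega>1 t - \<Omega>d1 t) + norm (\<Omega>2 t - \<Omega>d2 t)"
    have "norm (ka *\<^sub>R pA + kb *\<^sub>R ((1/a0) *\<^sub>R pB) + cross3 (G12 t) (\<Omega>d1 t))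
        \<le> norm (ka *\<^sub>R pA) + norm (kb *\<^sub>R ((1/a0) *\<^sub>R pB)) + norm (cross3 (G12 t) (\<Omega>d1 t))"
      by (meson add_mono norm_triangle_ineq order_trans order_refl)
    also have "\<dots> \<le> ka * ?n + kb * ?n + norm (G12 t) * Bd"
    proof (intro add_mono)
      show "norm (ka *\<^sub>R pA) \<le> ka * ?n" using bA ka_pos by (simp add: mult_left_mono)
      show "norm (kb *\<^sub>R ((1/a0) *\<^sub>R pB)) \<le> kb * ?n"
        using mult_left_mono[OF bB, of kb] kb_pos by (simp only: norm_scaleR) simp
      show "norm (cross3 (G12 t) (\<Omega>d1 t)) \<le> norm (G12 t) * Bd"
        using norm_cross_le[of "G12 t" "\<Omega>d1 t"] Od1_bd[OF t0]
        by (meson mult_left_mono norm_ge_zero order_trans)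
    qed
    finally show ?thesis unfolding v12 by (simp add: algebra_simps)
  qed

  have Qtk: "((\<lambda>\<tau>. transpose (Qd \<tau>)) has_vector_derivative transpose (Qd t) ** hat (- (Qd t *v \<Omega>d12 t))) (at t within {0..})"
    by (rule Qt_kin[OF Qk rQt])
  have WQ': "- (Qd t *v \<Omega>d12 t) = \<Omega>d2 t - transpose (transpose (Qd t)) *v \<Omega>d1 t"
    unfolding WQ by (simp add: matrix_vector_mult_diff_distrib rot_QT[OF rQt])
  define ZA where "ZA = transpose (transpose (Qd t)) *v B12 t"
  define ZB where "ZB = transpose (transpose (Qd t)) *v C1 t"
  define qA where "qA = cross3 (cross3 ZA (transpose (transpose (Qd t)) *v (\<Omega>1 t - \<Omega>d1 t))) (B21 t) + cross3 ZA (cross3 (B21 t) (\<Omega>2 t - \<Omega>d2 t))"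
  define qB where "qB = cross3 (cross3 ZB (transpose (transpose (Qd t)) *v (\<Omega>1 t - \<Omega>d1 t))) (C2 t) + cross3 ZB (cross3 (C2 t) (\<Omega>2 t - \<Omega>d2 t))"
  have dFA: "((\<lambda>\<tau>. cross3 (transpose (transpose (Qd \<tau>)) *v B12 \<tau>) (B21 \<tau>)) has_vector_derivative
      qA + cross3 (cross3 ZA (B21 t)) (\<Omega>d2 t)) (at t within {0..})"
    unfolding qA_def ZA_def by (rule e_core[OF dB21 dB12 Qtk rQT WQ'])
  have dFB: "((\<lambda>\<tau>. cross3 (transpose (transpose (Qd \<tau>)) *v C1 \<tau>) (C2 \<tau>)) has_vector_derivative
      qB + cross3 (cross3 ZB (C2 t)) (\<Omega>d2 t)) (at t within {0..})"
    unfolding qB_def ZB_def by (rule e_core[OF dC2 dC1 Qtk rQT WQ'])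
  have dG21: "(G21 has_vector_derivative
      (ka *\<^sub>R (qA + cross3 (cross3 ZA (B21 t)) (\<Omega>d2 t)) + kb *\<^sub>R ((1/a0) *\<^sub>R (qB + cross3 (cross3 ZB (C2 t)) (\<Omega>d2 t)))))
      (at t within {0..})"
    unfolding G21_def
    by (intro has_vector_derivative_add bounded_linear.has_vector_derivative[OF bounded_linear_scaleR_right] dFA dFB)
  have v21: "ka *\<^sub>R (qA + cross3 (cross3 ZA (B21 t)) (\<Omega>d2 t)) + kb *\<^sub>R ((1/a0) *\<^sub>R (qB + cross3 (cross3 ZB (C2 t)) (\<Omega>d2 t)))
     = ka *\<^sub>R qA + kb *\<^sub>R ((1/a0) *\<^sub>R qB) + cross3 (G21 t) (\<Omega>d2 t)"
    unfolding G21_def ZA_def ZB_def by (simp add: cross_add_left cross_mult_left algebra_simps)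
  have cA: "norm (1 *\<^sub>R qA) \<le> norm (\<Omega>2 t - \<Omega>d2 t) + norm (\<Omega>1 t - \<Omega>d1 t)"
    unfolding qA_def by (rule pbound[OF rQT]) (simp_all add: ZA_def rot_norm[OF rQt] nB12[OF t0] nB21[OF t0])
  have cB: "norm ((1/a0) *\<^sub>R qB) \<le> norm (\<Omega>2 t - \<Omega>d2 t) + norm (\<Omega>1 t - \<Omega>d1 t)"
    unfolding qB_def by (rule pbound[OF rQT]) (use a0p w0 \<mu> hw' in \<open>simp_all add: ZB_def rot_norm[OF rQt] nC1[OF t0] nC2[OF t0] a0_def mult.commute\<close>)
  have iii21: "norm (ka *\<^sub>R (qA + cross3 (cross3 ZA (B21 t)) (\<Omega>d2 t)) + kb *\<^sub>R ((1/a0) *\<^sub>R (qB + cross3 (cross3 ZB (C2 t)) (\<Omega>d2 t))))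
     \<le> (ka + kb) * (norm (\<Omega>1 t - \<Omega>d1 t) + norm (\<Omega>2 t - \<Omega>d2 t)) + Bd * norm (G21 t)"
  proof -
    let ?n = "norm (\<Omega>2 t - \<Omega>d2 t) + norm (\<Omega>1 t - \<Omega>d1 t)"
    have "norm (ka *\<^sub>R qA + kb *\<^sub>R ((1/a0) *\<^sub>R qB) + cross3 (G21 t) (\<Omega>d2 t))
        \<le> norm (ka *\<^sub>R qA) + norm (kb *\<^sub>R ((1/a0) *\<^sub>R qB)) + norm (cross3 (G21 t) (\<Omega>d2 t))"
      by (meson add_mono norm_triangle_ineq order_trans order_refl)
    also have "\<dots> \<le> ka * ?n + kb * ?n + norm (G21 t) * Bd"
    proof (intro add_mono)
      show "norm (ka *\<^sub>R qA) \<le> ka * ?n" using cA ka_pos by (simp add: mult_left_mono)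
      show "norm (kb *\<^sub>R ((1/a0) *\<^sub>R qB)) \<le> kb * ?n"
        using mult_left_mono[OF cB, of kb] kb_pos by (simp only: norm_scaleR) simp
      show "norm (cross3 (G21 t) (\<Omega>d2 t)) \<le> norm (G21 t) * Bd"
        using norm_cross_le[of "G21 t" "\<Omega>d2 t"] Od2_bd[OF t0]
        by (meson mult_left_mono norm_ge_zero order_trans)
    qed
    finally show ?thesis unfolding v21 by (simp add: algebra_simps)
  qed

  have r1t: "rotation_matrix (R1 t)" and r2t: "rotation_matrix (R2 t)" using rot1[OF t0] rot2[OF t0] .
  define N where "N = R1 t ** transpose (Qd t) ** transpose (R2 t)"
  define u2 where "u2 = (1 / norm w) *\<^sub>R w"
  have s12ne: "s12 \<noteq> 0" using ns12 by auto
  have repA1: "1 + 1 / (norm s12 * norm s21) * ((transpose (R2 t) *v s21) \<bullet> (Qd t *v (transpose (R1 t) *v s12)))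
       = 1 - ((1 / norm s12) *\<^sub>R s12) \<bullet> (N *v ((1 / norm s12) *\<^sub>R s12))"
    unfolding N_def by (rule rep(1)[OF r1t r2t rQt _ _ s12ne, of s21 1]) (simp_all add: hs21)
  have repA2: "(1 / (norm s12 * norm s21)) *\<^sub>R cross3 (transpose (Qd t) *v (transpose (R2 t) *v s21)) (transpose (R1 t) *v s12)
       = transpose (R1 t) *v cross3 ((1 / norm s12) *\<^sub>R s12) (N *v ((1 / norm s12) *\<^sub>R s12))"
    unfolding N_def by (rule rep(2)[OF r1t r2t rQt _ _ s12ne, of s21 1]) (simp_all add: hs21)
  have rN: "rotation_matrix N"
    unfolding N_def by (rule rep(3)[OF r1t r2t rQt _ _ s12ne, of s21 1]) (simp_all add: hs21)
  have repB1: "1 + 1 / (norm w * norm w') * ((transpose (R2 t) *v w') \<bullet> (Qd t *v (transpose (R1 t) *v w)))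
       = 1 - u2 \<bullet> (N *v u2)"
    unfolding N_def u2_def by (rule rep(1)[OF r1t r2t rQt hw' \<mu> w0])
  have repB2: "(1 / (norm w * norm w')) *\<^sub>R cross3 (transpose (Qd t) *v (transpose (R2 t) *v w')) (transpose (R1 t) *v w)
       = transpose (R1 t) *v cross3 u2 (N *v u2)"
    unfolding N_def u2_def by (rule rep(2)[OF r1t r2t rQt hw' \<mu> w0])
  have Ft: "F t = ka * (1 - s12 \<bullet> (N *v s12)) + kb * (1 - u2 \<bullet> (N *v u2))"
  proof -
    have "1 + B21 t \<bullet> (Qd t *v B12 t) = 1 - s12 \<bullet> (N *v s12)"
      using repA1 ns12 ns21 unfolding B21_def B12_def bvec_def by simp
    moreover have "1 + (1/a0) * (C2 t \<bullet> (Qd t *v C1 t)) = 1 - u2 \<bullet> (N *v u2)"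
      using repB1 unfolding C1w[OF t0] C2w[OF t0] a0_def by simp
    ultimately show ?thesis unfolding F_def by simp
  qed
  define E where "E = ka *\<^sub>R cross3 s12 (N *v s12) + kb *\<^sub>R cross3 u2 (N *v u2)"
  have Gt: "G12 t = transpose (R1 t) *v E"
  proof -
    have "cross3 (transpose (Qd t) *v B21 t) (B12 t) = transpose (R1 t) *v cross3 s12 (N *v s12)"
      using repA2 ns12 ns21 unfolding B21_def B12_def bvec_def by simp
    moreover have "(1/a0) *\<^sub>R cross3 (transpose (Qd t) *v C2 t) (C1 t) = transpose (R1 t) *v cross3 u2 (N *v u2)"
      using repB2 unfolding C1w[OF t0] C2w[OF t0] a0_def by simp
    ultimately show ?thesis unfolding G12_def E_def
      by (simp add: matrix_vector_right_distrib matrix_vector_mult_scaleR)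
  qed
  have nGt: "norm (G12 t) = norm E"
    unfolding Gt using rot_norm[OF rot_transpose[OF r1t]] by simp
  have nu2: "u2 \<bullet> u2 = 1" using w0 unfolding u2_def
    by (simp add: inner_scaleR_left inner_scaleR_right power2_norm_eq_inner[symmetric] power2_eq_square)
  have ou: "s12 \<bullet> u2 = 0" unfolding u2_def w_def by (simp add: inner_scaleR_right dot_cross_self)
  note KIV = key_iv[OF rN hs12 nu2 ou ka_pos kb_pos, folded E_def Ft[symmetric], folded nGt]
  show "let s12 = sdir p1 p2; s13 = sdir p1 p3; s21 = sdir p2 p1; s23 = sdir p2 p3;
         Psi12 = (\<lambda>\<tau>. Psi_pair ka kb (R1 \<tau>) (R2 \<tau>) (Qd \<tau>) s12 s13 s21 s23);
         e12 = (\<lambda>\<tau>. e_pair ka kb (R1 \<tau>) (R2 \<tau>) (Qd \<tau>) s12 s13 s21 s23);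
         e21 = (\<lambda>\<tau>. e_pair ka kb (R2 \<tau>) (R1 \<tau>) (transpose (Qd \<tau>)) s21 s23 s12 s13);
         eO1 = \<Omega>1 t - \<Omega>d1 t;
         eO2 = \<Omega>2 t - \<Omega>d2 t
     in
       e12 t = - (transpose (Qd t) *v e21 t) \<and> norm (e12 t) = norm (e21 t)
     \<and> (Psi12 has_real_derivative (e12 t \<bullet> eO1 + e21 t \<bullet> eO2)) (at t within {0..})
     \<and> (\<exists>v. (e12 has_vector_derivative v) (at t within {0..}) \<and>
            norm v \<le> (ka + kb) * (norm eO1 + norm eO2) + Bd * norm (e12 t))
     \<and> (\<exists>v. (e21 has_vector_derivative v) (at t within {0..}) \<and>
            norm v \<le> (ka + kb) * (norm eO1 + norm eO2) + Bd * norm (e21 t))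
     \<and> (Psi12 t \<le> \<psi> \<and> \<psi> < 2 * min ka kb \<longrightarrow>
          min ka kb / (2 * max (max (ka\<^sup>2) (kb\<^sup>2)) ((ka - kb)\<^sup>2) + 2 * (ka + kb)\<^sup>2)
            * (norm (e12 t))\<^sup>2 \<le> Psi12 t
        \<and> Psi12 t \<le> min ka kb * (ka + kb) / (min (ka\<^sup>2) (kb\<^sup>2) * (2 * min ka kb - \<psi>))
            * (norm (e12 t))\<^sup>2)"
    unfolding Let_def s12_def[symmetric] s13_def[symmetric] s21_def[symmetric] s23_def[symmetric]
    apply (intro conjI impI)
    subgoal using i1 eqG12[OF t0] eqG21[OF t0] by simp
    subgoal using i2 eqG12[OF t0] eqG21[OF t0] by simp
    subgoal
    proof -
      have dF': "(F has_real_derivative (G12 t \<bullet> (\<Omega>1 t - \<Omega>d1 t) + G21 t \<bullet> (\<Omega>2 t - \<Omega>d2 t))) (at t within {0..})"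
        using dF unfolding dFv .
      show ?thesis unfolding eqG12[OF t0] eqG21[OF t0]
        by (rule has_field_derivative_transform_within[OF dF', of 1]) (use eqF t0 in auto)
    qed
    subgoal
      apply (rule exI, rule conjI)
       apply (rule has_vector_derivative_transform_within[OF dG12, of 1])
      using eqG12 iii12 t0 by auto
    subgoal
      apply (rule exI, rule conjI)
       apply (rule has_vector_derivative_transform_within[OF dG21, of 1])
      using eqG21 iii21 t0 by auto
    subgoal using KIV(1) eqF[OF t0] eqG12[OF t0] Ft by simp
    subgoal using KIV(2) eqF[OF t0] eqG12[OF t0] Ft by simp
    done
qed


end
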